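(* Let $k\neq 0$, $a$, $b$ be real numbers and let $\{S^{(a,b)}_{k,n}\}_{n\ge 0}$ be the generalized $k$-FL sequence. (a) For an even integer $n\ge 2$, if $S^{(a,b)}_{k,n+1}-S^{(a,b)}_{k,n}\neq -bk+2b-a$, then the matrix $A^{(k,a,b)}_n$ is invertible. (b) For an odd integer $n\ge 1$, the matrix $B^{(k,a,b)}_n$ is invertible if and only if $S^{(a,b)}_{k,n+1}+S^{(a,b)}_{k,n}\neq bk+2b+a$.
   Context: For real numbers $k,a,b$, the generalized $k$-FL sequence $\{S^{(a,b)}_{k,n}\}_{n\ge0}$ is defined by $S^{(a,b)}_{k,0}=2b$, $S^{(a,b)}_{k,1}=bk+a$, and $S^{(a,b)}_{k,n}=k\,S^{(a,b)}_{k,n-1}+S^{(a,b)}_{k,n-2}$ for $n\ge2$. For $n\ge1$, $A^{(k,a,b)}_n$ is the $n\times n$ real skew circulant matrix whose $(i,j)$ entry is $S^{(a,b)}_{k,j-i+1}$ if $j\ge i$ and $-S^{(a,b)}_{k,n+j-i+1}$ if $j<i$. $B^{(k,a,b)}_n$ is the $n\times n$ circulant matrix whose $(i,j)$ entry is $S^{(a,b)}_{k,j-i+1}$ if $j\ge i$ and $S^{(a,b)}_{k,n+j-i+1}$ if $j<i$. *)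

theory Defs
  imports "Jordan_Normal_Form.Matrix" "Jordan_Normal_Form.Determinant"
begin

fun kFL :: "real \<Rightarrow> real \<Rightarrow> real \<Rightarrow> nat \<Rightarrow> real" where
  "kFL k a b 0 = 2 * b"
| "kFL k a b (Suc 0) = b * k + a"
| "kFL k a b (Suc (Suc n)) = k * kFL k a b (Suc n) + kFL k a b n"

text \<open>Skew circulant matrix A_n (0-based indices; the index shift cancels).\<close>
definition skewcircA :: "real \<Rightarrow> real \<Rightarrow> real \<Rightarrow> nat \<Rightarrow> real mat" where
  "skewcircA k a b n = mat n n (\<lambda>(i, j).
     if j \<ge> i then kFL k a b (j - i + 1) else - kFL k a b (n + j - i + 1))"

definition circB :: "real \<Rightarrow> real \<Rightarrow> real \<Rightarrow> nat \<Rightarrow> real mat" where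
  "circB k a b n = mat n n (\<lambda>(i, j).
     if j \<ge> i then kFL k a b (j - i + 1) else kFL k a b (n + j - i + 1))"

end

theory Submission imports Defs begin

lemma kFL_rec2: "kFL k a b (n+2) = k * kFL k a b (n+1) + kFL k a b n"
  by (simp add: numeral_2_eq_2)

lemma key_id:
  fixes x :: "nat \<Rightarrow> real"
  shows "(\<Sum>d<n. kFL k a b (d+1) * x (i+d)) - k * (\<Sum>d<n. kFL k a b (d+1) * x (i+1+d))
     - (\<Sum>d<n. kFL k a b (d+1) * x (i+2+d))
   = kFL k a b 1 * x i + kFL k a b 0 * x (i+1) - kFL k a b (n+1) * x (i+n) - kFL k a b n * x (i+n+1)"
proof (induction n)
  case 0 then show ?case by simp
next
  case (Suc n)
  have r: "kFL k a b (n+2) = k * kFL k a b (n+1) + kFL k a b n" by (rule kFL_rec2)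
  have e1: "i + 1 + n = i + n + 1" "i + 2 + n = i + (n + 2)" "i + Suc n = i + n + 1" "Suc n + 1 = n + 2" by auto
  show ?case using Suc r unfolding sum.lessThan_Suc e1
    by (simp add: algebra_simps)
qed

lemma sum_id: "k * (\<Sum>d<n. kFL k a b (d+1)) = kFL k a b (n+1) + kFL k a b n - kFL k a b 1 - kFL k a b 0"
proof (induction n)
  case 0 then show ?case by simp
next
  case (Suc n)
  have r: "kFL k a b (n+2) = k * kFL k a b (n+1) + kFL k a b n" by (rule kFL_rec2)
  have e1: "Suc n + 1 = n + 2" by auto
  show ?case using Suc r unfolding sum.lessThan_Suc e1
    by (simp add: algebra_simps)
qed

lemma circ_row:
  fixes g w w' :: "nat \<Rightarrow> real"
  assumes "i < n"
  shows "(\<Sum>j<n. (if j \<ge> i then g (j-i) * w j else g (n+j-i) * w' j))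
       = (\<Sum>d<n. g d * (if i+d < n then w (i+d) else w' (i+d-n)))"
proof (rule sum.reindex_bij_witness[where i="\<lambda>d. if i+d < n then i+d else i+d-n"
      and j="\<lambda>j. if j \<ge> i then j - i else n+j-i"])
  fix a assume "a \<in> {..<n}" then show "(if i + (if i \<le> a then a - i else n + a - i) < n then i + (if i \<le> a then a - i else n + a - i)
          else i + (if i \<le> a then a - i else n + a - i) - n) = a" using assms by (cases "i \<le> a") auto
next
  fix a assume "a \<in> {..<n}" then show "(if i \<le> a then a - i else n + a - i) \<in> {..<n}" using assms by (cases "i \<le> a") auto
next
  fix b assume "b \<in> {..<n}" then show "(if i \<le> (if i + b < n then i + b else i + b - n) then (if i + b < n then i + b else i + b - n) - i
          else n + (if i + b < n then i + b else i + b - n) - i) = b" using assms by (cases "i + b < n") auto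
next
  fix b assume "b \<in> {..<n}" then show "(if i + b < n then i + b else i + b - n) \<in> {..<n}" using assms by (cases "i + b < n") auto
next
  fix a assume "a \<in> {..<n}" then show "g (if i \<le> a then a - i else n + a - i) *
         (if i + (if i \<le> a then a - i else n + a - i) < n then w (i + (if i \<le> a then a - i else n + a - i))
          else w' (i + (if i \<le> a then a - i else n + a - i) - n)) =
         (if i \<le> a then g (a - i) * w a else g (n + a - i) * w' a)" using assms by (cases "i \<le> a") auto
qed

lemma inv_iff_det:
  fixes A :: "real mat"
  assumes A: "A \<in> carrier_mat n n"
  shows "invertible_mat A \<longleftrightarrow> det A \<noteq> 0"
proof
  assume "invertible_mat A"
  then obtain B where AB: "A * B = 1\<^sub>m n" and BA: "B * A = 1\<^sub>m (dim_row B)"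
    using A unfolding invertible_mat_def inverts_mat_def by auto
  have "dim_col B = n" using arg_cong[OF AB, of dim_col] by simp
  moreover have "dim_row B = n" using arg_cong[OF BA, of dim_col] A by simp
  ultimately have B: "B \<in> carrier_mat n n" by auto
  have "det (A * B) = 1" using AB by simp
  then have "det A * det B = 1" using det_mult[OF A B] by simp
  then show "det A \<noteq> 0" by auto
next
  assume "det A \<noteq> 0"
  from det_non_zero_imp_unit[OF A this, of "()"]
  obtain B where B: "B \<in> carrier_mat n n" and "A * B = 1\<^sub>m n" "B * A = 1\<^sub>m n"
    unfolding Units_def ring_mat_def by auto
  then show "invertible_mat A" using A unfolding invertible_mat_def inverts_mat_def square_mat.simps
    by auto
qed

lemma kernel_per:
  fixes x :: "nat \<Rightarrow> real" and \<sigma> :: real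
  assumes n: "n > 0" and per: "\<And>i. x (i+n) = \<sigma> * x i"
    and z: "\<And>i. i < n \<Longrightarrow> (\<Sum>d<n. kFL k a b (d+1) * x (i+d)) = 0"
  shows "(kFL k a b 1 - \<sigma> * kFL k a b (n+1)) * x i + (kFL k a b 0 - \<sigma> * kFL k a b n) * x (i+1) = 0"
proof -
  define y where "y = (\<lambda>i. \<Sum>d<n. kFL k a b (d+1) * x (i+d))"
  have yper: "y (i+n) = \<sigma> * y i" for i
  proof -
    have "y (i+n) = (\<Sum>d<n. kFL k a b (d+1) * x ((i+d)+n))" unfolding y_def
      by (simp add: add.commute add.left_commute)
    also have "\<dots> = \<sigma> * y i" unfolding y_def per by (simp add: sum_distrib_left algebra_simps)
    finally show ?thesis .
  qed
  have yz: "y i = 0" for i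
  proof (induction i rule: less_induct)
    case (less i)
    show ?case
    proof (cases "i < n")
      case True then show ?thesis using z unfolding y_def by simp
    next
      case False
      then have "i = (i - n) + n" by simp
      then have "y i = \<sigma> * y (i - n)" using yper by metis
      also have "y (i - n) = 0" using less n False by simp
      finally show ?thesis by simp
    qed
  qed
  have "y i - k * y (i+1) - y (i+2) = kFL k a b 1 * x i + kFL k a b 0 * x (i+1) - kFL k a b (n+1) * x (i+n) - kFL k a b n * x (i+n+1)"
    unfolding y_def by (rule key_id)
  moreover have "x (i+n+1) = \<sigma> * x (i+1)" using per[of "i+1"] by (simp add: algebra_simps)
  ultimately show ?thesis using yz per[of i] by (simp add: algebra_simps)
qed

lemma solve:
  fixes x :: "nat \<Rightarrow> real"
  assumes rec: "\<And>i. u * x i + w * x (i+1) = 0"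
    and nz: "u \<noteq> 0 \<or> w \<noteq> 0"
    and xn: "x n = \<sigma> * x 0"
    and cond: "w \<noteq> 0 \<Longrightarrow> (- u / w) ^ n = \<sigma> \<Longrightarrow> False"
  shows "x i = 0"
proof (cases "w = 0")
  case True
  then have "u \<noteq> 0" using nz by auto
  then show ?thesis using rec[of i] True by simp
next
  case False
  have pw: "x j = (- u / w) ^ j * x 0" for j
  proof (induction j)
    case 0 then show ?case by simp
  next
    case (Suc j)
    have "x (Suc j) = - u / w * x j" using rec[of j] False by (simp add: field_simps)
    then show ?case using Suc by simp
  qed
  show ?thesis
  proof (cases "x 0 = 0")
    case True then show ?thesis using pw[of i] by simp
  next
    case x0: False
    have "(- u / w) ^ n * x 0 = \<sigma> * x 0" using pw[of n] xn by metis
    then have "(- u / w) ^ n = \<sigma>" using x0 by simp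
    then show ?thesis using cond False by blast
  qed
qed

lemma circB_row:
  assumes i: "i < n" and v: "v \<in> carrier_vec n"
  shows "(circB k a b n *\<^sub>v v) $ i = (\<Sum>d<n. kFL k a b (d+1) * (if i+d < n then v $ (i+d) else v $ (i+d-n)))"
proof -
  have "(circB k a b n *\<^sub>v v) $ i = (\<Sum>j<n. (if j \<ge> i then kFL k a b (j-i+1) * v $ j else kFL k a b (n+j-i+1) * v $ j))"
    using i v unfolding circB_def
    by (auto simp: scalar_prod_def atLeast0LessThan intro!: sum.cong)
  also have "\<dots> = (\<Sum>d<n. kFL k a b (d+1) * (if i+d < n then v $ (i+d) else v $ (i+d-n)))"
    using circ_row[OF i, of "\<lambda>d. kFL k a b (d+1)" "\<lambda>j. v $ j" "\<lambda>j. v $ j"] by simp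
  finally show ?thesis .
qed

lemma skewA_row:
  assumes i: "i < n" and v: "v \<in> carrier_vec n"
  shows "(skewcircA k a b n *\<^sub>v v) $ i = (\<Sum>d<n. kFL k a b (d+1) * (if i+d < n then v $ (i+d) else - v $ (i+d-n)))"
proof -
  have "(skewcircA k a b n *\<^sub>v v) $ i = (\<Sum>j<n. (if j \<ge> i then kFL k a b (j-i+1) * v $ j else kFL k a b (n+j-i+1) * (- v $ j)))"
    using i v unfolding skewcircA_def
    by (auto simp: scalar_prod_def atLeast0LessThan intro!: sum.cong)
  also have "\<dots> = (\<Sum>d<n. kFL k a b (d+1) * (if i+d < n then v $ (i+d) else - v $ (i+d-n)))"
    using circ_row[OF i, of "\<lambda>d. kFL k a b (d+1)" "\<lambda>j. v $ j" "\<lambda>j. - v $ j"] by simp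
  finally show ?thesis .
qed

lemma S01: "kFL k a b 0 = 2 * b" "kFL k a b 1 = b * k + a" by auto

theorem theorem2p7:
  fixes k a b :: real
  assumes "k \<noteq> 0"
  shows "(\<forall>n::nat. even n \<and> n \<ge> 2 \<and>
            kFL k a b (n + 1) - kFL k a b n \<noteq> - b * k + 2 * b - a
            \<longrightarrow> invertible_mat (skewcircA k a b n))
       \<and> (\<forall>n::nat. odd n \<longrightarrow>
            (invertible_mat (circB k a b n) \<longleftrightarrow>
             kFL k a b (n + 1) + kFL k a b n \<noteq> b * k + 2 * b + a))"
proof (intro conjI allI impI)
  fix n :: nat
  assume H: "even n \<and> n \<ge> 2 \<and> kFL k a b (n + 1) - kFL k a b n \<noteq> - b * k + 2 * b - a"
  then have n: "n > 0" and ev: "even n" by auto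
  have C: "skewcircA k a b n \<in> carrier_mat n n" unfolding skewcircA_def by simp
  show "invertible_mat (skewcircA k a b n)"
    unfolding inv_iff_det[OF C]
  proof
    assume "det (skewcircA k a b n) = 0"
    then obtain v where v: "v \<in> carrier_vec n" "v \<noteq> 0\<^sub>v n" "skewcircA k a b n *\<^sub>v v = 0\<^sub>v n"
      using det_0_iff_vec_prod_zero_field[OF C] by auto
    define x where "x = (\<lambda>j. (-1::real) ^ (j div n) * v $ (j mod n))"
    have per: "x (j+n) = (-1) * x j" for j
      unfolding x_def using n by simp
    have xs: "x (i+d) = (if i+d < n then v $ (i+d) else - v $ (i+d-n))" if "i < n" "d < n" for i d
    proof (cases "i + d < n")
      case True then show ?thesis unfolding x_def by simp
    next
      case False
      then have "(i+d) div n = Suc ((i+d-n) div n)" "(i+d) mod n = (i+d-n) mod n"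
        using le_div_geq[OF n] le_mod_geq by auto
      moreover have "i+d-n < n" using that by auto
      ultimately show ?thesis unfolding x_def using False by simp
    qed
    have z: "(\<Sum>d<n. kFL k a b (d+1) * x (i+d)) = 0" if "i < n" for i
    proof -
      have "(\<Sum>d<n. kFL k a b (d+1) * x (i+d)) = (skewcircA k a b n *\<^sub>v v) $ i"
        unfolding skewA_row[OF that v(1)] using xs[OF that] by (auto intro!: sum.cong)
      then show ?thesis using v(3) that by simp
    qed
    have rec: "(kFL k a b 1 - (-1) * kFL k a b (n+1)) * x i + (kFL k a b 0 - (-1) * kFL k a b n) * x (i+1) = 0" for i
      by (rule kernel_per[OF n per z])
    have xall: "x i = 0" for i
    proof (rule solve[where u="kFL k a b 1 - - 1 * kFL k a b (n + 1)" and w="kFL k a b 0 - - 1 * kFL k a b n" and x=x, OF rec])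
      show "kFL k a b 1 - - 1 * kFL k a b (n + 1) \<noteq> 0 \<or> kFL k a b 0 - - 1 * kFL k a b n \<noteq> 0"
        using H unfolding S01 by auto
      show "x n = (-1) * x 0" using per[of 0] by simp
      fix w assume "(- (kFL k a b 1 - - 1 * kFL k a b (n + 1)) / (kFL k a b 0 - - 1 * kFL k a b n)) ^ n = - 1"
      moreover have "0 \<le> (- (kFL k a b 1 - - 1 * kFL k a b (n + 1)) / (kFL k a b 0 - - 1 * kFL k a b n)) ^ n"
        using zero_le_even_power[OF ev] by blast
      ultimately show False by simp
    qed
    have "v = 0\<^sub>v n"
    proof (rule eq_vecI)
      fix i assume "i < dim_vec (0\<^sub>v n :: real vec)"
      then have i: "i < n" by simp
      have "x i = v $ i" unfolding x_def using i by simp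
      then show "v $ i = 0\<^sub>v n $ i" using xall[of i] i by simp
    qed (use v in simp)
    then show False using v(2) by simp
  qed
next
  fix n :: nat
  assume od: "odd n"
  then have n: "n > 0" by (cases n) auto
  have C: "circB k a b n \<in> carrier_mat n n" unfolding circB_def by simp
  show "invertible_mat (circB k a b n) \<longleftrightarrow> kFL k a b (n + 1) + kFL k a b n \<noteq> b * k + 2 * b + a"
    unfolding inv_iff_det[OF C]
  proof
    assume d: "det (circB k a b n) \<noteq> 0"
    show "kFL k a b (n + 1) + kFL k a b n \<noteq> b * k + 2 * b + a"
    proof
      assume eq: "kFL k a b (n + 1) + kFL k a b n = b * k + 2 * b + a"
      have s0: "(\<Sum>d<n. kFL k a b (d+1)) = 0"
        using sum_id[of k a b n] eq assms unfolding S01 by simp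
      define v :: "real vec" where "v = vec n (\<lambda>_. 1)"
      have vc: "v \<in> carrier_vec n" unfolding v_def by simp
      have "v \<noteq> 0\<^sub>v n"
      proof
        assume "v = 0\<^sub>v n"
        then have "v $ 0 = 0\<^sub>v n $ 0" by simp
        then show False using n unfolding v_def by simp
      qed
      moreover have "circB k a b n *\<^sub>v v = 0\<^sub>v n"
      proof (rule eq_vecI)
        fix i assume "i < dim_vec (0\<^sub>v n :: real vec)"
        then have i: "i < n" by simp
        have "(circB k a b n *\<^sub>v v) $ i = (\<Sum>d<n. kFL k a b (d+1))"
          unfolding circB_row[OF i vc] unfolding v_def using i by (auto intro!: sum.cong simp: less_diff_conv2)
        then show "(circB k a b n *\<^sub>v v) $ i = 0\<^sub>v n $ i" using s0 i by simp
      qed (simp add: circB_def)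
      ultimately have "det (circB k a b n) = 0"
        using det_0_iff_vec_prod_zero_field[OF C] vc by auto
      then show False using d by simp
    qed
  next
    assume H: "kFL k a b (n + 1) + kFL k a b n \<noteq> b * k + 2 * b + a"
    show "det (circB k a b n) \<noteq> 0"
    proof
      assume "det (circB k a b n) = 0"
      then obtain v where v: "v \<in> carrier_vec n" "v \<noteq> 0\<^sub>v n" "circB k a b n *\<^sub>v v = 0\<^sub>v n"
        using det_0_iff_vec_prod_zero_field[OF C] by auto
      define x where "x = (\<lambda>j. v $ (j mod n))"
      have per: "x (j+n) = 1 * x j" for j
        unfolding x_def using n by simp
      have xs: "x (i+d) = (if i+d < n then v $ (i+d) else v $ (i+d-n))" if "i < n" "d < n" for i d
      proof (cases "i + d < n")
        case True then show ?thesis unfolding x_def by simp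
      next
        case False
        then have "(i+d) mod n = (i+d-n) mod n"
          using le_mod_geq by auto
        moreover have "i+d-n < n" using that by auto
        ultimately show ?thesis unfolding x_def using False by simp
      qed
      have z: "(\<Sum>d<n. kFL k a b (d+1) * x (i+d)) = 0" if "i < n" for i
      proof -
        have "(\<Sum>d<n. kFL k a b (d+1) * x (i+d)) = (circB k a b n *\<^sub>v v) $ i"
          unfolding circB_row[OF that v(1)] using xs[OF that] by (auto intro!: sum.cong)
        then show ?thesis using v(3) that by simp
      qed
      have rec: "(kFL k a b 1 - 1 * kFL k a b (n+1)) * x i + (kFL k a b 0 - 1 * kFL k a b n) * x (i+1) = 0" for i
        by (rule kernel_per[OF n per z])
      have xall: "x i = 0" for i
      proof (rule solve[where u="kFL k a b 1 - 1 * kFL k a b (n + 1)" and w="kFL k a b 0 - 1 * kFL k a b n" and x=x, OF rec])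
        show "kFL k a b 1 - 1 * kFL k a b (n + 1) \<noteq> 0 \<or> kFL k a b 0 - 1 * kFL k a b n \<noteq> 0"
          using H unfolding S01 by auto
        show "x n = 1 * x 0" using per[of 0] by simp
        assume w: "kFL k a b 0 - 1 * kFL k a b n \<noteq> 0"
        assume "(- (kFL k a b 1 - 1 * kFL k a b (n + 1)) / (kFL k a b 0 - 1 * kFL k a b n)) ^ n = 1"
        then have "root n 1 = - (kFL k a b 1 - 1 * kFL k a b (n + 1)) / (kFL k a b 0 - 1 * kFL k a b n)"
          using odd_real_root_unique[OF od] by blast
        then have "- (kFL k a b 1 - 1 * kFL k a b (n + 1)) / (kFL k a b 0 - 1 * kFL k a b n) = 1"
          using n by simp
        then have "- (kFL k a b 1 - 1 * kFL k a b (n + 1)) = (kFL k a b 0 - 1 * kFL k a b n)"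
          using w by (simp add: field_simps)
        then show False using H unfolding S01 by (simp add: algebra_simps)
      qed
      have "v = 0\<^sub>v n"
      proof (rule eq_vecI)
        fix i assume "i < dim_vec (0\<^sub>v n :: real vec)"
        then have i: "i < n" by simp
        have "x i = v $ i" unfolding x_def using i by simp
        then show "v $ i = 0\<^sub>v n $ i" using xall[of i] i by simp
      qed (use v in simp)
      then show False using v(2) by simp
    qed
  qed
qed

end
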